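(* Let $\mathcal{T}$ be a finite or countably infinite set, let $\prec$ be a strict total order on $\mathcal{T}$, and let $\mathbf{p} \ne \mathbf{q}$ be two probability distributions on $\mathcal{T}$. For a positive integer $m$, let $X_0 \sim \mathbf{q}$, $X_1,\dots,X_m \sim^{\mathrm{iid}} \mathbf{p}$, $U_0,\dots,U_m \sim^{\mathrm{iid}} \mathrm{Uniform}(0,1)$ be mutually independent, and let $R = \sum_{j=1}^m \big(\mathbb{I}[X_j \prec X_0] + \mathbb{I}[X_j = X_0, U_j < U_0]\big)$. Then there is some $M \ge 1$ such that, for $m = M$, $R$ is not uniformly distributed on $\{0,1,\dots,M\}$.
   Context: $\mathbb{I}[\cdot]$ denotes the indicator of an event; $R$ depends on $m$. *)

theory Defs
  imports "HOL-Probability.Probability"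
begin

definition rank_space :: "'a pmf \<Rightarrow> 'a pmf \<Rightarrow> nat \<Rightarrow> ('a \<times> (nat \<Rightarrow> 'a) \<times> (nat \<Rightarrow> real)) measure" where
  "rank_space p q m =
     measure_pmf q \<Otimes>\<^sub>M
       (PiM {1..m} (\<lambda>_. measure_pmf p) \<Otimes>\<^sub>M
        PiM {0..m} (\<lambda>_. uniform_measure lborel {0<..<1::real}))"

definition rank_stat :: "('a \<Rightarrow> 'a \<Rightarrow> bool) \<Rightarrow> nat \<Rightarrow> 'a \<times> (nat \<Rightarrow> 'a) \<times> (nat \<Rightarrow> real) \<Rightarrow> nat" where
  "rank_stat lt m \<omega> = (case \<omega> of (x0, xs, us) \<Rightarrow>
     (\<Sum>j=1..m. of_bool (lt (xs j) x0) + of_bool (xs j = x0 \<and> us j < us 0)))"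

end

theory Submission
  imports Defs
begin

lemma abs_int_bound:
  fixes f g :: "'b \<Rightarrow> real"
  assumes "integrable M f" "integrable M g" "\<And>x. x \<in> space M \<Longrightarrow> \<bar>f x\<bar> \<le> g x"
  shows "\<bar>\<integral>x. f x \<partial>M\<bar> \<le> (\<integral>x. g x \<partial>M)"
proof -
  have "\<bar>\<integral>x. f x \<partial>M\<bar> \<le> (\<integral>x. \<bar>f x\<bar> \<partial>M)"
    using integral_norm_bound[of M f] by (simp add: real_norm_def)
  also have "\<dots> \<le> (\<integral>x. g x \<partial>M)"
    by (rule integral_mono) (use assms in auto)
  finally show ?thesis .
qed

lemma poly_moment:
  fixes N :: "'b measure" and V :: "'b \<Rightarrow> real"
  assumes N: "prob_space N" and Vm: "V \<in> borel_measurable N"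
    and Vb: "\<forall>\<omega>\<in>space N. 0 \<le> V \<omega> \<and> V \<omega> \<le> 1"
    and mom: "\<forall>n. (\<integral>\<omega>. V \<omega> ^ n \<partial>N) = 1 / (real n + 1)"
  shows "(\<integral>\<omega>. (\<Sum>i\<le>n. a i * V \<omega> ^ i) \<partial>N) = (\<integral>t. (\<Sum>i\<le>n. a i * t ^ i) * indicator {0..1} t \<partial>(lborel::real measure))"
proof -
  interpret prob_space N by (rule N)
  have int: "integrable N (\<lambda>\<omega>. V \<omega> ^ i)" for i
  proof (rule integrable_const_bound[where B=1])
    show "AE x in N. norm (V x ^ i) \<le> 1" using Vb by (auto intro!: AE_I2 power_le_one)
  qed (use Vm in measurable)
  have intl: "integrable lborel (\<lambda>t::real. t ^ i * indicator {0..1} t)" for i :: nat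
    by (rule borel_integrable_atLeastAtMost) (intro continuous_intros)
  have "(\<integral>\<omega>. (\<Sum>i\<le>n. a i * V \<omega> ^ i) \<partial>N) = (\<Sum>i\<le>n. a i * (\<integral>\<omega>. V \<omega> ^ i \<partial>N))"
    using int by (simp add: Bochner_Integration.integral_sum)
  also have "\<dots> = (\<Sum>i\<le>n. a i * (\<integral>t. t ^ i * indicator {0..1} t \<partial>(lborel::real measure)))"
    using mom by (simp add: integral_power add.commute)
  also have "\<dots> = (\<integral>t. (\<Sum>i\<le>n. a i * (t ^ i * indicator {0..1} t)) \<partial>(lborel::real measure))"
    using intl by (simp add: Bochner_Integration.integral_sum)
  also have "\<dots> = (\<integral>t. (\<Sum>i\<le>n. a i * t ^ i) * indicator {0..1} t \<partial>(lborel::real measure))"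
    by (simp add: sum_distrib_right mult.assoc)
  finally show ?thesis .
qed

lemma moments_det:
  fixes N :: "'b measure" and V :: "'b \<Rightarrow> real" and f :: "real \<Rightarrow> real"
  assumes N: "prob_space N" and Vm: "V \<in> borel_measurable N"
    and Vb: "\<forall>\<omega>\<in>space N. 0 \<le> V \<omega> \<and> V \<omega> \<le> 1"
    and mom: "\<forall>n. (\<integral>\<omega>. V \<omega> ^ n \<partial>N) = 1 / (real n + 1)"
    and cont: "continuous_on UNIV f"
  shows "(\<integral>\<omega>. f (V \<omega>) \<partial>N) = (\<integral>t. f t * indicator {0..1} t \<partial>(lborel::real measure))"
proof -
  interpret prob_space N by (rule N)
  have fm: "f \<in> borel_measurable borel" using cont by (rule borel_measurable_continuous_onI)
  have fVm: "(\<lambda>\<omega>. f (V \<omega>)) \<in> borel_measurable N" using fm Vm by measurable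
  have hint: "integrable N (\<lambda>\<omega>. h (V \<omega>))" if hc: "continuous_on UNIV h" for h :: "real \<Rightarrow> real"
  proof -
    have "bounded (h ` {0..1})"
      using compact_continuous_image[OF continuous_on_subset[OF hc] compact_Icc] by (auto intro: compact_imp_bounded)
    then obtain B where B: "\<And>x. x \<in> {0..1} \<Longrightarrow> norm (h x) \<le> B"
      by (fastforce simp: bounded_iff)
    have hm: "h \<in> borel_measurable borel" using hc by (rule borel_measurable_continuous_onI)
    show ?thesis
      by (rule integrable_const_bound[where B=B]) (use B Vb hm Vm in auto)
  qed
  let ?L = "\<integral>\<omega>. f (V \<omega>) \<partial>N" and ?R = "\<integral>t. f t * indicator {0..1} t \<partial>(lborel::real measure)"
  have key: "\<bar>?L - ?R\<bar> \<le> 2 * e" if e: "e > 0" for e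
  proof -
    obtain g where gp: "real_polynomial_function g" and ge: "\<And>x. x \<in> {0..1::real} \<Longrightarrow> \<bar>f x - g x\<bar> < e"
      using Stone_Weierstrass_real_polynomial_function[of "{0..1::real}" f e] cont e
      by (auto intro: continuous_on_subset)
    obtain a n where g: "g = (\<lambda>x. \<Sum>i\<le>n. a i * x^i)"
      using gp real_polynomial_function_iff_sum by blast
    have gc: "continuous_on UNIV g" unfolding g by (intro continuous_intros)
    have gm: "g \<in> borel_measurable borel" using gc by (rule borel_measurable_continuous_onI)
    have eq: "(\<integral>\<omega>. g (V \<omega>) \<partial>N) = (\<integral>t. g t * indicator {0..1} t \<partial>(lborel::real measure))"
      unfolding g by (rule poly_moment[OF N Vm Vb mom])
    have fgm: "(\<lambda>\<omega>. f (V \<omega>) - g (V \<omega>)) \<in> borel_measurable N" using fm gm Vm by measurable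
    have bnd: "\<forall>\<omega>\<in>space N. \<bar>f (V \<omega>) - g (V \<omega>)\<bar> \<le> e"
      using Vb ge by (auto intro: less_imp_le)
    have i1: "integrable N (\<lambda>\<omega>. f (V \<omega>) - g (V \<omega>))"
      by (rule integrable_const_bound[where B=e]) (use bnd fgm in auto)
    have b1: "\<bar>\<integral>\<omega>. f (V \<omega>) - g (V \<omega>) \<partial>N\<bar> \<le> e"
    proof -
      have "\<bar>\<integral>\<omega>. f (V \<omega>) - g (V \<omega>) \<partial>N\<bar> \<le> (\<integral>\<omega>. e \<partial>N)"
        by (rule abs_int_bound) (use i1 bnd in auto)
      then show ?thesis by (simp add: prob_space)
    qed
    have fgc: "continuous_on UNIV (\<lambda>t::real. f t - g t)" using cont gc by (intro continuous_intros)
    have i2: "integrable lborel (\<lambda>t::real. (f t - g t) * indicator {0..1} t)"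
      by (rule borel_integrable_atLeastAtMost) (use fgc in \<open>auto simp: continuous_on_eq_continuous_at\<close>)
    have i3: "integrable lborel (\<lambda>t::real. e * indicator {0..1::real} t)"
      by (intro integrable_mult_right integrable_real_indicator) auto
    have b2: "\<bar>\<integral>t. (f t - g t) * indicator {0..1} t \<partial>(lborel::real measure)\<bar> \<le> e"
    proof -
      have "\<bar>\<integral>t. (f t - g t) * indicator {0..1} t \<partial>(lborel::real measure)\<bar> \<le> (\<integral>t. e * indicator {0..1::real} t \<partial>(lborel::real measure))"
        by (rule abs_int_bound[OF i2 i3])
           (use ge in \<open>auto simp: indicator_def abs_mult intro: less_imp_le\<close>)
      then show ?thesis by simp
    qed
    have ig1: "integrable N (\<lambda>\<omega>. g (V \<omega>))" 
      using hint[OF gc] .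
    have if1: "integrable N (\<lambda>\<omega>. f (V \<omega>))"
      using hint[OF cont] .
    have if2: "integrable lborel (\<lambda>t::real. f t * indicator {0..1} t)"
      by (rule borel_integrable_atLeastAtMost) (use cont in \<open>auto simp: continuous_on_eq_continuous_at\<close>)
    have ig2: "integrable lborel (\<lambda>t::real. g t * indicator {0..1} t)"
      by (rule borel_integrable_atLeastAtMost) (use gc in \<open>auto simp: continuous_on_eq_continuous_at\<close>)
    have "(\<integral>\<omega>. f (V \<omega>) - g (V \<omega>) \<partial>N) = ?L - (\<integral>\<omega>. g (V \<omega>) \<partial>N)"
      using if1 ig1 by simp
    moreover have "(\<integral>t. (f t - g t) * indicator {0..1} t \<partial>(lborel::real measure)) = ?R - (\<integral>t. g t * indicator {0..1} t \<partial>(lborel::real measure))"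
      using if2 ig2 by (simp add: left_diff_distrib)
    ultimately show ?thesis using b1 b2 eq by linarith
  qed
  show ?thesis
  proof (rule ccontr)
    assume "?L \<noteq> ?R"
    then have "\<bar>?L - ?R\<bar> > 0" by simp
    from key[of "\<bar>?L - ?R\<bar> / 4"] this show False by simp
  qed
qed


lemma sum_eq_card_nat:
  fixes t :: "nat \<Rightarrow> nat"
  assumes "finite A" "\<forall>j\<in>A. t j \<le> 1"
  shows "(\<Sum>j\<in>A. t j) = card A \<longleftrightarrow> (\<forall>j\<in>A. t j = 1)"
  using assms
proof (induction A rule: finite_induct)
  case empty then show ?case by simp
next
  case (insert x F)
  have "(\<Sum>j\<in>F. t j) \<le> card F"
    using insert sum_mono[of F t "\<lambda>_. 1"] by auto
  then show ?case using insert by auto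
qed

lemma rank_stat_M:
  fixes lt :: "'a \<Rightarrow> 'a \<Rightarrow> bool"
  assumes irrefl: "\<forall>x. \<not> lt x x"
  shows "rank_stat lt M (x0, xs, us) = M \<longleftrightarrow> (\<forall>j\<in>{1..M}. lt (xs j) x0 \<or> (xs j = x0 \<and> us j < us 0))"
proof -
  let ?t = "\<lambda>j. of_bool (lt (xs j) x0) + of_bool (xs j = x0 \<and> us j < us 0) :: nat"
  have le: "\<forall>j\<in>{1..M}. ?t j \<le> 1" using irrefl by auto
  have "rank_stat lt M (x0, xs, us) = (\<Sum>j\<in>{1..M}. ?t j)" by (simp add: rank_stat_def)
  then have "rank_stat lt M (x0, xs, us) = M \<longleftrightarrow> (\<forall>j\<in>{1..M}. ?t j = 1)"
    using sum_eq_card_nat[OF _ le] by simp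
  also have "\<dots> \<longleftrightarrow> (\<forall>j\<in>{1..M}. lt (xs j) x0 \<or> (xs j = x0 \<and> us j < us 0))"
    using irrefl by auto
  finally show ?thesis .
qed

lemma prod_of_bool_ennreal:
  "finite A \<Longrightarrow> (\<Prod>j\<in>A. (of_bool (P j) :: ennreal)) = of_bool (\<forall>j\<in>A. P j)"
  by (induction A rule: finite_induct) auto

lemma emeasure_lt_or_eq:
  fixes lt :: "'a \<Rightarrow> 'a \<Rightarrow> bool" and p :: "'a pmf"
  assumes irrefl: "\<forall>x. \<not> lt x x"
  shows "emeasure (measure_pmf p) {y. lt y x0 \<or> (y = x0 \<and> v < w)}
    = ennreal (measure p {y. lt y x0}) + ennreal (pmf p x0) * of_bool (v < w)"
proof (cases "v < w")
  case True
  have "{y. lt y x0 \<or> (y = x0 \<and> v < w)} = {y. lt y x0} \<union> {x0}" using True by auto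
  moreover have "emeasure (measure_pmf p) ({y. lt y x0} \<union> {x0}) = emeasure (measure_pmf p) {y. lt y x0} + emeasure (measure_pmf p) {x0}"
    using irrefl by (intro plus_emeasure[symmetric]) auto
  ultimately show ?thesis using True
    by (simp add: measure_pmf.emeasure_eq_measure measure_pmf_single)
next
  case False
  then show ?thesis by (simp add: measure_pmf.emeasure_eq_measure)
qed

lemma nn_integral_H:
  fixes a c w :: real
  assumes "0 \<le> a" "0 \<le> c" "0 < w" "w < 1"
  shows "(\<integral>\<^sup>+v. ennreal a + ennreal c * of_bool (v < w) \<partial>uniform_measure lborel {0<..<1::real})
     = ennreal (a + c * w)"
proof -
  let ?U = "uniform_measure lborel {0<..<1::real}"
  have Up: "prob_space ?U" by (intro prob_space_uniform_measure) auto
  interpret U: prob_space ?U by (rule Up)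
  have e1: "emeasure ?U {..<w} = ennreal w"
  proof -
    have "{0<..<1::real} \<inter> {..<w} = {0<..<w}" using assms by auto
    then show ?thesis using assms by (simp add: divide_ennreal_def)
  qed
  have "(\<integral>\<^sup>+v. ennreal a + ennreal c * of_bool (v < w) \<partial>?U)
      = (\<integral>\<^sup>+v. ennreal a \<partial>?U) + (\<integral>\<^sup>+v. ennreal c * indicator {..<w} v \<partial>?U)"
    by (subst nn_integral_add[symmetric]) (auto intro!: nn_integral_cong simp: indicator_def)
  also have "\<dots> = ennreal a + ennreal c * ennreal w"
    using e1 by (simp add: nn_integral_cmult_indicator U.emeasure_space_1)
  also have "\<dots> = ennreal (a + c * w)" using assms by (simp add: ennreal_mult ennreal_plus)
  finally show ?thesis .
qed

lemma emeasure_rank_M: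
  fixes lt :: "'a::countable \<Rightarrow> 'a \<Rightarrow> bool" and p q :: "'a pmf"
  assumes irrefl: "\<forall>x. \<not> lt x x"
  shows "emeasure (rank_space p q M) {\<omega> \<in> space (rank_space p q M). rank_stat lt M \<omega> = M}
     = (\<integral>\<^sup>+x. \<integral>\<^sup>+w. ennreal ((measure p {y. lt y x} + pmf p x * max 0 (min 1 w)) ^ M)
          \<partial>uniform_measure lborel {0<..<1::real} \<partial>measure_pmf q)"
proof -
  let ?U = "uniform_measure lborel {0<..<1::real}"
  let ?P = "PiM {1..M} (\<lambda>_. measure_pmf p)"
  let ?UU = "PiM {0..M} (\<lambda>_. ?U)"
  let ?C = "\<lambda>x0 y v w. lt y x0 \<or> (y = x0 \<and> v < w)"
  let ?F = "\<lambda>\<omega>::'a \<times> (nat \<Rightarrow> 'a) \<times> (nat \<Rightarrow> real). \<Prod>j\<in>{1..M}. (of_bool (?C (fst \<omega>) (fst (snd \<omega>) j) (snd (snd \<omega>) j) (snd (snd \<omega>) 0)) :: ennreal)"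
  let ?a = "\<lambda>x. measure p {y. lt y x}" and ?c = "\<lambda>x. pmf p x"
  let ?H = "\<lambda>x0 v w. ennreal (?a x0) + ennreal (?c x0) * of_bool (v < w)"
  have Up: "prob_space ?U" by (intro prob_space_uniform_measure) auto
  interpret U: prob_space ?U by (rule Up)
  interpret PU: product_prob_space "\<lambda>_::nat. ?U" UNIV by unfold_locales
  interpret PP: product_prob_space "\<lambda>_::nat. measure_pmf p" UNIV by unfold_locales
  have Pp: "prob_space ?P" by (rule prob_space_PiM) (rule prob_space_measure_pmf)
  have UUp: "prob_space ?UU" by (rule prob_space_PiM) (rule Up)
  interpret PUU: pair_sigma_finite ?P ?UU
    using Pp UUp by (intro pair_sigma_finite.intro prob_space_imp_sigma_finite)
  have S2: "sigma_finite_measure (?P \<Otimes>\<^sub>M ?UU)"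
    using Pp UUp by (intro prob_space_imp_sigma_finite prob_space_pair)
  have Fm: "?F \<in> borel_measurable (rank_space p q M)"
    unfolding rank_space_def by measurable
  have step1: "emeasure (rank_space p q M) {\<omega> \<in> space (rank_space p q M). rank_stat lt M \<omega> = M}
      = (\<integral>\<^sup>+\<omega>. ?F \<omega> \<partial>rank_space p q M)"
  proof -
    have seteq: "{\<omega> \<in> space (rank_space p q M). rank_stat lt M \<omega> = M}
        = {\<omega> \<in> space (rank_space p q M). \<forall>j\<in>{1..M}. ?C (fst \<omega>) (fst (snd \<omega>) j) (snd (snd \<omega>) j) (snd (snd \<omega>) 0)}"
    proof (rule Collect_cong)
      fix \<omega> :: "'a \<times> (nat \<Rightarrow> 'a) \<times> (nat \<Rightarrow> real)"
      obtain x0 xs us where "\<omega> = (x0, xs, us)" by (cases \<omega>) auto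
      then show "(\<omega> \<in> space (rank_space p q M) \<and> rank_stat lt M \<omega> = M) =
          (\<omega> \<in> space (rank_space p q M) \<and> (\<forall>j\<in>{1..M}. ?C (fst \<omega>) (fst (snd \<omega>) j) (snd (snd \<omega>) j) (snd (snd \<omega>) 0)))"
        using rank_stat_M[where lt=lt, OF irrefl] by simp
    qed
    have sets: "{\<omega> \<in> space (rank_space p q M). \<forall>j\<in>{1..M}. ?C (fst \<omega>) (fst (snd \<omega>) j) (snd (snd \<omega>) j) (snd (snd \<omega>) 0)} \<in> sets (rank_space p q M)"
      unfolding rank_space_def by measurable
    show ?thesis
      unfolding seteq
      by (subst nn_integral_indicator[OF sets, symmetric])
         (auto intro!: nn_integral_cong simp: prod_of_bool_ennreal indicator_def)
  qed
  have step2: "(\<integral>\<^sup>+\<omega>. ?F \<omega> \<partial>rank_space p q M) = (\<integral>\<^sup>+x. \<integral>\<^sup>+z. ?F (x, z) \<partial>(?P \<Otimes>\<^sub>M ?UU) \<partial>measure_pmf q)"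
    unfolding rank_space_def
    by (rule sigma_finite_measure.nn_integral_fst[OF S2, symmetric]) (use Fm in \<open>simp add: rank_space_def\<close>)
  have step3: "(\<integral>\<^sup>+z. ?F (x, z) \<partial>(?P \<Otimes>\<^sub>M ?UU))
      = (\<integral>\<^sup>+w. (\<integral>\<^sup>+v. ?H x v w \<partial>?U) ^ M \<partial>?U)" for x
  proof -
    have m3': "(\<lambda>z::(nat \<Rightarrow> 'a) \<times> (nat \<Rightarrow> real). \<Prod>j\<in>{1..M}. (of_bool (lt (fst z j) x \<or> (fst z j = x \<and> snd z j < snd z 0)) :: ennreal)) \<in> borel_measurable (?P \<Otimes>\<^sub>M ?UU)"
      by measurable
    have m3: "(\<lambda>z. ?F (x, z)) \<in> borel_measurable (?P \<Otimes>\<^sub>M ?UU)" using m3' by simp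
    have "(\<integral>\<^sup>+z. ?F (x, z) \<partial>(?P \<Otimes>\<^sub>M ?UU)) = (\<integral>\<^sup>+us. \<integral>\<^sup>+xs. ?F (x, (xs, us)) \<partial>?P \<partial>?UU)"
      by (rule PUU.nn_integral_snd[symmetric]) (use m3 in simp)
    also have "\<dots> = (\<integral>\<^sup>+us. (\<Prod>j\<in>{1..M}. ?H x (us j) (us 0)) \<partial>?UU)"
    proof (rule nn_integral_cong)
      fix us :: "nat \<Rightarrow> real"
      have "(\<integral>\<^sup>+xs. ?F (x, (xs, us)) \<partial>?P) = (\<Prod>j\<in>{1..M}. \<integral>\<^sup>+y. (of_bool (?C x y (us j) (us 0)) :: ennreal) \<partial>measure_pmf p)"
        using PP.product_nn_integral_prod[of "{1..M}" "\<lambda>j y. (of_bool (?C x y (us j) (us 0)) :: ennreal)"] by simp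
      also have "\<dots> = (\<Prod>j\<in>{1..M}. ?H x (us j) (us 0))"
      proof (rule prod.cong[OF refl])
        fix j
        have "(\<integral>\<^sup>+y. (of_bool (?C x y (us j) (us 0)) :: ennreal) \<partial>measure_pmf p)
            = (\<integral>\<^sup>+y. indicator {y. ?C x y (us j) (us 0)} y \<partial>measure_pmf p)"
          by (intro nn_integral_cong) (simp add: indicator_def)
        also have "\<dots> = emeasure (measure_pmf p) {y. ?C x y (us j) (us 0)}" by simp
        also have "\<dots> = ?H x (us j) (us 0)" by (rule emeasure_lt_or_eq[where lt=lt, OF irrefl])
        finally show "(\<integral>\<^sup>+y. (of_bool (?C x y (us j) (us 0)) :: ennreal) \<partial>measure_pmf p) = ?H x (us j) (us 0)" .
      qed
      finally show "(\<integral>\<^sup>+xs. ?F (x, (xs, us)) \<partial>?P) = (\<Prod>j\<in>{1..M}. ?H x (us j) (us 0))" .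
    qed
    also have "\<dots> = (\<integral>\<^sup>+w. \<integral>\<^sup>+us. (\<Prod>j\<in>{1..M}. ?H x ((us(0 := w)) j) ((us(0 := w)) 0)) \<partial>PiM {1..M} (\<lambda>_. ?U) \<partial>?U)"
    proof -
      have ins: "{0..M} = insert 0 {1..M}" by auto
      have mH: "(\<lambda>us. \<Prod>j\<in>{1..M}. ?H x (us j) (us 0)) \<in> borel_measurable (PiM (insert 0 {1..M}) (\<lambda>_. ?U))"
        by measurable
      show ?thesis unfolding ins
        by (rule PU.product_nn_integral_insert_rev) (auto intro: mH)
    qed
    also have "\<dots> = (\<integral>\<^sup>+w. \<integral>\<^sup>+us. (\<Prod>j\<in>{1..M}. ?H x (us j) w) \<partial>PiM {1..M} (\<lambda>_. ?U) \<partial>?U)"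
      by (intro nn_integral_cong prod.cong refl) auto
    also have "\<dots> = (\<integral>\<^sup>+w. (\<Prod>j\<in>{1..M}. \<integral>\<^sup>+v. ?H x v w \<partial>?U) \<partial>?U)"
      by (intro nn_integral_cong PU.product_nn_integral_prod) auto
    also have "\<dots> = (\<integral>\<^sup>+w. (\<integral>\<^sup>+v. ?H x v w \<partial>?U) ^ M \<partial>?U)"
      by simp
    finally show ?thesis .
  qed
  have step4: "(\<integral>\<^sup>+w. (\<integral>\<^sup>+v. ?H x v w \<partial>?U) ^ M \<partial>?U)
     = (\<integral>\<^sup>+w. ennreal ((?a x + ?c x * max 0 (min 1 w)) ^ M) \<partial>?U)" for x
  proof (rule nn_integral_cong_AE)
    have "AE w in ?U. w \<in> {0<..<1}" by (rule AE_uniform_measureI) auto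
    then show "AE w in ?U. (\<integral>\<^sup>+v. ?H x v w \<partial>?U) ^ M = ennreal ((?a x + ?c x * max 0 (min 1 w)) ^ M)"
    proof (rule AE_mp, intro AE_I2 impI)
      fix w :: real assume w: "w \<in> {0<..<1}"
      then have mm: "max 0 (min 1 w) = w" by auto
      have X: "(\<integral>\<^sup>+v. ?H x v w \<partial>?U) = ennreal (?a x + ?c x * w)"
        using w by (intro nn_integral_H) auto
      have "(\<integral>\<^sup>+v. ?H x v w \<partial>?U) ^ M = ennreal (?a x + ?c x * w) ^ M" by (simp only: X)
      also have "\<dots> = ennreal ((?a x + ?c x * w) ^ M)" by (rule ennreal_power) (use w in simp)
      finally show "(\<integral>\<^sup>+v. ?H x v w \<partial>?U) ^ M = ennreal ((?a x + ?c x * max 0 (min 1 w)) ^ M)"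
        by (simp only: mm)
    qed
  qed
  show ?thesis
    using step1 step2 step3 step4 by simp
qed


lemma pmf_le_imp_eq:
  fixes p q :: "'a pmf"
  assumes le: "\<forall>x. pmf q x \<le> pmf p x"
  shows "p = q"
proof (rule pmf_eqI, rule ccontr)
  fix x assume ne: "pmf p x \<noteq> pmf q x"
  have lt: "pmf q x < pmf p x" using le[rule_format, of x] ne by linarith
  let ?A = "UNIV - {x}"
  have "emeasure (measure_pmf q) ?A = (\<integral>\<^sup>+y. indicator ?A y \<partial>measure_pmf q)" by simp
  also have "\<dots> = (\<integral>\<^sup>+y. ennreal (pmf q y) * indicator ?A y \<partial>count_space UNIV)"
    by (rule nn_integral_measure_pmf)
  also have "\<dots> \<le> (\<integral>\<^sup>+y. ennreal (pmf p y) * indicator ?A y \<partial>count_space UNIV)"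
    using le by (intro nn_integral_mono mult_right_mono) auto
  also have "\<dots> = emeasure (measure_pmf p) ?A"
    by (simp add: nn_integral_measure_pmf[symmetric])
  finally have "measure q ?A \<le> measure p ?A"
    by (simp add: measure_pmf.emeasure_eq_measure)
  moreover have "measure q ?A = 1 - pmf q x" "measure p ?A = 1 - pmf p x"
    using measure_pmf.prob_compl[of "{x}"] by (auto simp: measure_pmf_single)
  ultimately show False using lt by simp
qed

theorem corollary3p3:
  fixes lt :: "'a::countable \<Rightarrow> 'a \<Rightarrow> bool" and p q :: "'a pmf"
  assumes irrefl: "\<forall>x. \<not> lt x x"
    and trans: "\<forall>x y z. lt x y \<longrightarrow> lt y z \<longrightarrow> lt x z"
    and total: "\<forall>x y. x \<noteq> y \<longrightarrow> lt x y \<or> lt y x"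
    and pq: "p \<noteq> q"
  shows "\<exists>M\<ge>1. \<not> (\<forall>k\<in>{0..M}.
            measure (rank_space p q M) {\<omega> \<in> space (rank_space p q M). rank_stat lt M \<omega> = k}
              = 1 / real (M + 1))"
proof (rule ccontr)
  assume "\<not> ?thesis"
  then have H: "\<And>M. M \<ge> 1 \<Longrightarrow> measure (rank_space p q M) {\<omega> \<in> space (rank_space p q M). rank_stat lt M \<omega> = M}
              = 1 / real (M + 1)" by auto
  let ?U = "uniform_measure lborel {0<..<1::real}"
  let ?N = "measure_pmf q \<Otimes>\<^sub>M ?U"
  define a where "a x = measure p {y. lt y x}" for x
  define c where "c x = pmf p x" for x
  define V where "V \<omega> = a (fst \<omega>) + c (fst \<omega>) * max 0 (min 1 (snd \<omega>))" for \<omega> :: "'a \<times> real"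
  have Up: "prob_space ?U" by (intro prob_space_uniform_measure) auto
  have Np: "prob_space ?N" by (intro prob_space_pair prob_space_measure_pmf Up)
  interpret N: prob_space ?N by (rule Np)
  have Usf: "sigma_finite_measure ?U" by (rule prob_space_imp_sigma_finite[OF Up])
  have Vm: "V \<in> borel_measurable ?N" unfolding V_def by measurable
  have ac: "0 \<le> a x" "0 \<le> c x" "a x + c x \<le> 1" for x
  proof -
    show "0 \<le> a x" "0 \<le> c x" by (auto simp: a_def c_def)
    have "measure p ({y. lt y x} \<union> {x}) = a x + c x"
      unfolding a_def c_def using irrefl
      by (subst measure_pmf.finite_measure_Union) (auto simp: measure_pmf_single)
    then show "a x + c x \<le> 1" using measure_pmf.prob_le_1 by metis
  qed
  have Vb: "\<forall>\<omega>\<in>space ?N. 0 \<le> V \<omega> \<and> V \<omega> \<le> 1"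
  proof
    fix \<omega> :: "'a \<times> real"
    let ?t = "max 0 (min 1 (snd \<omega>))"
    have t: "0 \<le> ?t" "?t \<le> 1" by auto
    have "c (fst \<omega>) * ?t \<le> c (fst \<omega>)" using ac(2) t by (simp add: mult_left_le)
    then show "0 \<le> V \<omega> \<and> V \<omega> \<le> 1" unfolding V_def using ac[of "fst \<omega>"] t by auto
  qed
  have mom: "\<forall>n. (\<integral>\<omega>. V \<omega> ^ n \<partial>?N) = 1 / (real n + 1)"
  proof
    fix n :: nat
    show "(\<integral>\<omega>. V \<omega> ^ n \<partial>?N) = 1 / (real n + 1)"
    proof (cases "n = 0")
      case True then show ?thesis by (simp add: N.prob_space)
    next
      case False
      have "(\<integral>\<omega>. V \<omega> ^ n \<partial>?N) = enn2real (\<integral>\<^sup>+\<omega>. ennreal (V \<omega> ^ n) \<partial>?N)"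
        by (rule integral_eq_nn_integral) (use Vb Vm in auto)
      also have "(\<integral>\<^sup>+\<omega>. ennreal (V \<omega> ^ n) \<partial>?N) = (\<integral>\<^sup>+x. \<integral>\<^sup>+w. ennreal (V (x, w) ^ n) \<partial>?U \<partial>measure_pmf q)"
        by (rule sigma_finite_measure.nn_integral_fst[OF Usf, symmetric]) (use Vm in measurable)
      also have "\<dots> = emeasure (rank_space p q n) {\<omega> \<in> space (rank_space p q n). rank_stat lt n \<omega> = n}"
        unfolding emeasure_rank_M[where lt=lt, OF irrefl] V_def a_def c_def by simp
      finally have "(\<integral>\<omega>. V \<omega> ^ n \<partial>?N) = measure (rank_space p q n) {\<omega> \<in> space (rank_space p q n). rank_stat lt n \<omega> = n}"
        by (simp add: measure_def)
      also have "\<dots> = 1 / real (n + 1)" using H[of n] False by simp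
      finally show ?thesis by simp
    qed
  qed
  have qle: "pmf q x0 \<le> pmf p x0 + 2 * d" if d: "d > 0" for x0 d
  proof -
    define a0 where "a0 = a x0"
    define b0 where "b0 = a x0 + c x0"
    define f where "f t = max 0 (min 1 (min ((t - (a0 - d)) / d) ((b0 + d - t) / d)))" for t :: real
    have fc: "continuous_on UNIV f" unfolding f_def using d by (intro continuous_intros) auto
    have f01: "0 \<le> f t" "f t \<le> 1" for t unfolding f_def by auto
    have eq: "(\<integral>\<omega>. f (V \<omega>) \<partial>?N) = (\<integral>t. f t * indicator {0..1} t \<partial>(lborel::real measure))"
      by (rule moments_det[OF Np Vm Vb mom fc])
    have fm: "f \<in> borel_measurable borel" using fc by (rule borel_measurable_continuous_onI)
    have lhs: "pmf q x0 \<le> (\<integral>\<omega>. f (V \<omega>) \<partial>?N)"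
    proof -
      have sx: "{x0} \<times> space ?U \<in> sets ?N" by simp
      have mx: "measure ?N ({x0} \<times> space ?U) = pmf q x0"
      proof -
        have "emeasure ?N ({x0} \<times> space ?U) = emeasure (measure_pmf q) {x0} * emeasure ?U (space ?U)"
          by (rule sigma_finite_measure.emeasure_pair_measure_Times[OF Usf]) auto
        also have "\<dots> = ennreal (pmf q x0) * 1"
          by (simp only: emeasure_pmf_single prob_space.emeasure_space_1[OF Up])
        finally have "emeasure ?N ({x0} \<times> space ?U) = ennreal (pmf q x0)" by simp
        then have "ennreal (measure ?N ({x0} \<times> space ?U)) = ennreal (pmf q x0)"
          using N.emeasure_eq_measure[of "{x0} \<times> space ?U"] by metis
        then show ?thesis using pmf_nonneg[of q x0] measure_nonneg[of ?N "{x0} \<times> space ?U"] ennreal_inj by metis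
      qed
      have "pmf q x0 = (\<integral>\<omega>. indicator ({x0} \<times> space ?U) \<omega> \<partial>?N)"
        using sx mx by simp
      also have "\<dots> \<le> (\<integral>\<omega>. f (V \<omega>) \<partial>?N)"
      proof (rule integral_mono)
        show "integrable ?N (\<lambda>\<omega>. indicator ({x0} \<times> space ?U) \<omega> :: real)"
          using sx by (intro integrable_real_indicator) (auto simp: N.emeasure_finite less_top[symmetric])
        show "integrable ?N (\<lambda>\<omega>. f (V \<omega>))"
          by (rule N.integrable_const_bound[where B=1]) (use f01 fm Vm in auto)
        fix \<omega> :: "'a \<times> real" assume "\<omega> \<in> space ?N"
        show "indicator ({x0} \<times> space ?U) \<omega> \<le> f (V \<omega>)"
        proof (cases "fst \<omega> = x0")
          case True
          let ?t = "max 0 (min 1 (snd \<omega>))"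
          have t: "0 \<le> ?t" "?t \<le> 1" by auto
          have "c x0 * ?t \<le> c x0" using ac(2) t by (simp add: mult_left_le)
          moreover have "0 \<le> c x0 * ?t" using ac(2) t by simp
          ultimately have "a0 \<le> V \<omega>" "V \<omega> \<le> b0" unfolding V_def a0_def b0_def using True by auto
          then have "f (V \<omega>) = 1" unfolding f_def using d by (auto simp: field_simps)
          then show ?thesis by (simp add: indicator_def)
        next
          case False
          then show ?thesis using f01 by (auto simp: indicator_def)
        qed
      qed
      finally show ?thesis .
    qed
    have rhs: "(\<integral>t. f t * indicator {0..1} t \<partial>(lborel::real measure)) \<le> pmf p x0 + 2 * d"
    proof -
      have "(\<integral>t. f t * indicator {0..1} t \<partial>(lborel::real measure)) \<le> (\<integral>t. indicator {a0 - d .. b0 + d} t \<partial>(lborel::real measure))"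
      proof (rule integral_mono)
        show "integrable lborel (\<lambda>t. f t * indicator {0..1} t :: real)"
          by (rule borel_integrable_atLeastAtMost) (use fc in \<open>auto simp: continuous_on_eq_continuous_at\<close>)
        show "integrable lborel (\<lambda>t. indicator {a0 - d .. b0 + d} t :: real)"
          by (intro integrable_real_indicator) (auto simp: emeasure_lborel_Icc_eq)
        fix t :: real
        show "f t * indicator {0..1} t \<le> indicator {a0 - d .. b0 + d} t"
        proof (cases "t \<in> {a0 - d .. b0 + d}")
          case True then show ?thesis using f01[of t] by (auto simp: indicator_def)
        next
          case False
          then have "t < a0 - d \<or> t > b0 + d" by auto
          then have "(t - (a0 - d)) / d < 0 \<or> (b0 + d - t) / d < 0" using d by (auto simp: divide_less_0_iff)
          then have "f t = 0" unfolding f_def by (auto simp: min_def max_def)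
          then show ?thesis by simp
        qed
      qed
      also have "\<dots> = b0 + d - (a0 - d)"
        using d ac[of x0] unfolding a0_def b0_def by simp
      also have "\<dots> = pmf p x0 + 2 * d" unfolding a0_def b0_def c_def by simp
      finally show ?thesis .
    qed
    show ?thesis using lhs rhs eq by linarith
  qed
  have "pmf q x \<le> pmf p x" for x
  proof (rule field_le_epsilon)
    fix e :: real assume "e > 0"
    then show "pmf q x \<le> pmf p x + e" using qle[of "e / 2" x] by simp
  qed
  then have "p = q" using pmf_le_imp_eq by blast
  with pq show False by simp
qed

end
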